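(* Let $G$ be a group with identity $e$, $A$ a finite set with $|A|\ge2$, $S\subseteq G$ finite with $e\in S$, and suppose $(\mathcal P,f)$ generates a local map $\mu:A^S\to A$. (1) If there exist $z,w\in\mathcal P^c$ with $z\neq w$ and $\mathrm{Res}_e(z)=\mathrm{Res}_e(w)$, then $e$ is essential for $\mu$. (2) If $f$ is well-behaved and there exist $p,q\in\mathcal P$ with $p\neq q$ and $\mathrm{Res}_e(p)=\mathrm{Res}_e(q)$, then $e$ is essential for $\mu$.
   Context: $A^S$ is the set of functions $S\to A$. For $s\in S$, $\mathrm{Res}_s(z)=z|_{S\setminus\{s\}}$. An element $s\in S$ is essential for $\mu$ if there exist $z,w\in A^S$ with $\mathrm{Res}_s(z)=\mathrm{Res}_s(w)$ but $\mu(z)\neq\mu(w)$. The pair $(\mathcal P,f)$ generates $\mu$ if $\mathcal P=\{z\in A^S:\mu(z)\neq z(e)\}$ and $f:\mathcal P\to A$ is the restriction of $\mu$ to $\mathcal P$; $\mathcal P^c=A^S\setminus\mathcal P$. The function $f$ is well-behaved if for all $p,q\in\mathcal P$: $p(e)=q(e)$ if and only if $f(p)=f(q)$. *)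

theory Defs
  imports "HOL-Algebra.Group" "HOL-Library.FuncSet"
begin

(* Configurations A^S are modelled as extensional functions S ->E A (PiE). *)

definition Res :: "'g set \<Rightarrow> 'g \<Rightarrow> ('g \<Rightarrow> 'a) \<Rightarrow> ('g \<Rightarrow> 'a)" where
  "Res S s z = restrict z (S - {s})"

definition essential :: "'g set \<Rightarrow> 'a set \<Rightarrow> (('g \<Rightarrow> 'a) \<Rightarrow> 'a) \<Rightarrow> 'g \<Rightarrow> bool" where
  "essential S A \<mu> s \<longleftrightarrow>
     (\<exists>z \<in> S \<rightarrow>\<^sub>E A. \<exists>w \<in> S \<rightarrow>\<^sub>E A. Res S s z = Res S s w \<and> \<mu> z \<noteq> \<mu> w)"

definition generates :: "'g set \<Rightarrow> 'a set \<Rightarrow> 'g \<Rightarrow> (('g \<Rightarrow> 'a) \<Rightarrow> 'a)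
    \<Rightarrow> ('g \<Rightarrow> 'a) set \<Rightarrow> (('g \<Rightarrow> 'a) \<Rightarrow> 'a) \<Rightarrow> bool" where
  "generates S A e \<mu> P f \<longleftrightarrow>
     P = {z \<in> S \<rightarrow>\<^sub>E A. \<mu> z \<noteq> z e} \<and> (\<forall>p \<in> P. f p = \<mu> p)"

definition well_behaved :: "'g \<Rightarrow> ('g \<Rightarrow> 'a) set \<Rightarrow> (('g \<Rightarrow> 'a) \<Rightarrow> 'a) \<Rightarrow> bool" where
  "well_behaved e P f \<longleftrightarrow> (\<forall>p \<in> P. \<forall>q \<in> P. p e = q e \<longleftrightarrow> f p = f q)"

end

theory Submission
  imports Defs
begin

lemma key:
  assumes "z \<in> S \<rightarrow>\<^sub>E A" "w \<in> S \<rightarrow>\<^sub>E A" "Res S e z = Res S e w" "z \<noteq> w"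
  shows "z e \<noteq> w e"
proof
  assume h: "z e = w e"
  have "z x = w x" for x
  proof (cases "x \<in> S - {e}")
    case True
    then show ?thesis using assms(3) unfolding Res_def by (metis restrict_apply')
  next
    case False
    then show ?thesis using assms(1,2) h by (metis DiffI PiE_arb singletonD)
  qed
  then show False using assms(4) by blast
qed

theorem mainTheorem4:
  fixes G :: "('g, 'b) monoid_scheme"
    and A :: "'a set" and S :: "'g set"
    and \<mu> :: "('g \<Rightarrow> 'a) \<Rightarrow> 'a"
    and P :: "('g \<Rightarrow> 'a) set" and f :: "('g \<Rightarrow> 'a) \<Rightarrow> 'a"
  assumes "group G"
    and "finite A" and "card A \<ge> 2"
    and "S \<subseteq> carrier G" and "finite S" and "\<one>\<^bsub>G\<^esub> \<in> S"
    and "\<mu> \<in> (S \<rightarrow>\<^sub>E A) \<rightarrow> A"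
    and "generates S A \<one>\<^bsub>G\<^esub> \<mu> P f"
  shows "((\<exists>z \<in> (S \<rightarrow>\<^sub>E A) - P. \<exists>w \<in> (S \<rightarrow>\<^sub>E A) - P.
              z \<noteq> w \<and> Res S \<one>\<^bsub>G\<^esub> z = Res S \<one>\<^bsub>G\<^esub> w)
            \<longrightarrow> essential S A \<mu> \<one>\<^bsub>G\<^esub>)
       \<and> ((well_behaved \<one>\<^bsub>G\<^esub> P f \<and>
            (\<exists>p \<in> P. \<exists>q \<in> P. p \<noteq> q \<and> Res S \<one>\<^bsub>G\<^esub> p = Res S \<one>\<^bsub>G\<^esub> q))
            \<longrightarrow> essential S A \<mu> \<one>\<^bsub>G\<^esub>)"
proof (intro conjI impI)
  have P: "P = {z \<in> S \<rightarrow>\<^sub>E A. \<mu> z \<noteq> z \<one>\<^bsub>G\<^esub>}" and F: "\<forall>p \<in> P. f p = \<mu> p"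
    using assms(8) unfolding generates_def by auto
  {
    assume "\<exists>z \<in> (S \<rightarrow>\<^sub>E A) - P. \<exists>w \<in> (S \<rightarrow>\<^sub>E A) - P.
              z \<noteq> w \<and> Res S \<one>\<^bsub>G\<^esub> z = Res S \<one>\<^bsub>G\<^esub> w"
    then obtain z w where z: "z \<in> S \<rightarrow>\<^sub>E A" "z \<notin> P" and w: "w \<in> S \<rightarrow>\<^sub>E A" "w \<notin> P"
      and zw: "z \<noteq> w" "Res S \<one>\<^bsub>G\<^esub> z = Res S \<one>\<^bsub>G\<^esub> w" by blast
    have "z \<one>\<^bsub>G\<^esub> \<noteq> w \<one>\<^bsub>G\<^esub>" using key[OF z(1) w(1) zw(2) zw(1)] .
    moreover have "\<mu> z = z \<one>\<^bsub>G\<^esub>" "\<mu> w = w \<one>\<^bsub>G\<^esub>" using z w P by auto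
    ultimately show "essential S A \<mu> \<one>\<^bsub>G\<^esub>" unfolding essential_def using z w zw by metis
  }
  {
    assume "well_behaved \<one>\<^bsub>G\<^esub> P f \<and>
            (\<exists>p \<in> P. \<exists>q \<in> P. p \<noteq> q \<and> Res S \<one>\<^bsub>G\<^esub> p = Res S \<one>\<^bsub>G\<^esub> q)"
    then obtain p q where wb: "well_behaved \<one>\<^bsub>G\<^esub> P f" and pq: "p \<in> P" "q \<in> P" "p \<noteq> q"
       "Res S \<one>\<^bsub>G\<^esub> p = Res S \<one>\<^bsub>G\<^esub> q" by blast
    have pS: "p \<in> S \<rightarrow>\<^sub>E A" "q \<in> S \<rightarrow>\<^sub>E A" using pq P by auto
    have "p \<one>\<^bsub>G\<^esub> \<noteq> q \<one>\<^bsub>G\<^esub>" using key[OF pS pq(4) pq(3)] .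
    then have "f p \<noteq> f q" using wb pq unfolding well_behaved_def by blast
    then have "\<mu> p \<noteq> \<mu> q" using F pq by auto
    then show "essential S A \<mu> \<one>\<^bsub>G\<^esub>" unfolding essential_def using pS pq by metis
  }
qed

end
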